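(* Let $n_{y'}$ be the number of occurrences of $y'$ among $y_1,\dots,y_l$, and define \[ e_{y'}:=\frac{1}{Y}\,\frac{l+Y\alpha}{n_{y'}+\alpha},\qquad y'\in\mathbf{Y}. \] Then $(e_{y'})$ is an e-variable valid under the Bayesian model, and it is the unique solution of \[ \mathbb{E}\sum_{y'\in\mathbf{Y}}\ln e_{y'}\to\max \] over all e-variables valid under the Bayesian model. Here the expectation is over $y_1,\dots,y_l,y$ generated from the Bayesian model.
   Context: Bayesian model: the label space is $\mathbf{Y}=\{1,\dots,Y\}$ with $Y\ge2$. The parameter $\theta$ lies in the simplex $\Theta=\{\theta\in[0,1]^Y:\sum_y\theta_y=1\}$ and is drawn from $\mathrm{Dir}(\alpha,\dots,\alpha)$ with $\alpha>0$. Given $\theta$, the observations $y_1,\dots,y_l,y$ are i.i.d. with $\Pr(y_i=u)=\theta_u$. The first $l$ observations form the training set; $y$ is the test observation. An e-variable is a family of nonnegative values $e_{y'}=f(y_1,\dots,y_l,y')$, $y'\in\mathbf{Y}$, for some function $f$. It is valid under the Bayesian model if $\mathbb{E}\,f(y_1,\dots,y_l,y)\le1$, where $y$ is the actual test observation. The convention $\ln 0=-\infty$ is used. *)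

theory Defs
  imports "HOL-Analysis.Analysis"
begin

text \<open>Labels are 1..Y. The Dirichlet parameter theta is parametrised by its first
  Y-1 coordinates x (indexed 1..Y-1), with theta_Y = 1 - sum of the others.\<close>

definition theta_of :: "nat \<Rightarrow> (nat \<Rightarrow> real) \<Rightarrow> nat \<Rightarrow> real" where
  "theta_of Y x u = (if u = Y then 1 - (\<Sum>v\<in>{1..<Y}. x v) else x u)"

definition dir_density :: "nat \<Rightarrow> real \<Rightarrow> (nat \<Rightarrow> real) \<Rightarrow> real" where
  "dir_density Y \<alpha> x =
     (if (\<forall>u\<in>{1..Y}. 0 < theta_of Y x u)
      then Gamma (real Y * \<alpha>) / (Gamma \<alpha>) ^ Y * (\<Prod>u\<in>{1..Y}. theta_of Y x u powr (\<alpha> - 1))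
      else 0)"

definition bayes_prob :: "nat \<Rightarrow> real \<Rightarrow> nat list \<Rightarrow> real" where
  "bayes_prob Y \<alpha> ys =
     enn2real (\<integral>\<^sup>+ x. ennreal (dir_density Y \<alpha> x * (\<Prod>i<length ys. theta_of Y x (ys ! i)))
                  \<partial>(\<Pi>\<^sub>M u\<in>{1..<Y}. lborel))"

definition train_sets :: "nat \<Rightarrow> nat \<Rightarrow> nat list set" where
  "train_sets Y l = {ts. length ts = l \<and> set ts \<subseteq> {1..Y}}"

text \<open>An e-variable: f ts y' is e_{y'} for training sequence ts.\<close>
definition e_variable :: "nat \<Rightarrow> nat \<Rightarrow> (nat list \<Rightarrow> nat \<Rightarrow> real) \<Rightarrow> bool" where
  "e_variable Y l f \<longleftrightarrow> (\<forall>ts\<in>train_sets Y l. \<forall>y'\<in>{1..Y}. 0 \<le> f ts y')"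

definition bayes_expect :: "nat \<Rightarrow> real \<Rightarrow> nat \<Rightarrow> (nat list \<Rightarrow> nat \<Rightarrow> real) \<Rightarrow> real" where
  "bayes_expect Y \<alpha> l f =
     (\<Sum>ts\<in>train_sets Y l. \<Sum>y\<in>{1..Y}. bayes_prob Y \<alpha> (ts @ [y]) * f ts y)"

definition valid_bayes :: "nat \<Rightarrow> real \<Rightarrow> nat \<Rightarrow> (nat list \<Rightarrow> nat \<Rightarrow> real) \<Rightarrow> bool" where
  "valid_bayes Y \<alpha> l f \<longleftrightarrow> e_variable Y l f \<and> bayes_expect Y \<alpha> l f \<le> 1"

definition ln_ext :: "real \<Rightarrow> ereal" where
  "ln_ext v = (if v = 0 then -\<infinity> else ereal (ln v))"

definition log_obj :: "nat \<Rightarrow> real \<Rightarrow> nat \<Rightarrow> (nat list \<Rightarrow> nat \<Rightarrow> real) \<Rightarrow> ereal" where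
  "log_obj Y \<alpha> l f =
     (\<Sum>ts\<in>train_sets Y l. \<Sum>y\<in>{1..Y}.
        ereal (bayes_prob Y \<alpha> (ts @ [y])) * (\<Sum>y'\<in>{1..Y}. ln_ext (f ts y')))"

end

theory Submission
  imports Defs
begin

lemma beta_1d:
  fixes a b s :: real
  assumes a: "a > 0" and b: "b > 0" and s: "s > 0"
  shows "(\<integral>\<^sup>+y. ennreal (if 0 < y \<and> y < s then y powr (a-1) * (s-y) powr (b-1) else 0) \<partial>lborel)
         = ennreal (s powr (a+b-1) * Beta a b)"
proof -
  let ?g = "\<lambda>y. ennreal (if 0 < y \<and> y < s then y powr (a-1) * (s-y) powr (b-1) else 0)"
  have "(\<integral>\<^sup>+y. ?g y \<partial>lborel) = \<bar>s\<bar> * (\<integral>\<^sup>+x. ?g (0 + s * x) \<partial>lborel)"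
    by (rule nn_integral_real_affine) (use s in auto)
  also have "(\<lambda>x. ?g (0 + s * x)) = (\<lambda>x. ennreal (s powr (a-1) * s powr (b-1)) *
      (ennreal (x powr (a - 1) * (1 - x) powr (b - 1)) * indicator {0..1} x))"
  proof
    fix x :: real
    show "?g (0 + s * x) = ennreal (s powr (a-1) * s powr (b-1)) *
      (ennreal (x powr (a - 1) * (1 - x) powr (b - 1)) * indicator {0..1} x)"
    proof (cases "0 < x \<and> x < 1")
      case True
      have "s - s * x = s * (1 - x)" by (simp add: algebra_simps)
      with True s show ?thesis
        by (simp add: powr_mult ennreal_mult[symmetric] indicator_def mult_ac)
    next
      case False
      then have "x \<le> 0 \<or> x \<ge> 1" by auto
      then have "\<not> (0 < s * x \<and> s * x < s) " using s
        by (auto simp: zero_less_mult_iff)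
      then have "?g (0 + s * x) = 0" by (simp only: if_False simp_thms add_0) simp
      moreover have "ennreal (x powr (a - 1) * (1 - x) powr (b - 1)) * indicator {0..1} x = 0"
      proof (cases "x \<in> {0..1}")
        case True
        with False have "x = 0 \<or> x = 1" by auto
        then show ?thesis by auto
      qed simp
      ultimately show ?thesis by (simp only:) simp
    qed
  qed
  also have "(\<integral>\<^sup>+x. ennreal (s powr (a-1) * s powr (b-1)) *
      (ennreal (x powr (a - 1) * (1 - x) powr (b - 1)) * indicator {0..1} x) \<partial>lborel)
     = ennreal (s powr (a-1) * s powr (b-1)) * (\<integral>\<^sup>+x. 
      ennreal (x powr (a - 1) * (1 - x) powr (b - 1)) * indicator {0..1} x \<partial>lborel)"
    by (rule nn_integral_cmult) simp
  also have "(\<integral>\<^sup>+x. ennreal (x powr (a - 1) * (1 - x) powr (b - 1)) * indicator {0..1} x \<partial>lborel)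
      = ennreal (Beta a b)"
    by (rule nn_integral_has_integral_lebesgue'[OF _ has_integral_Beta_real[OF a b]]) auto
  also have "ennreal \<bar>s\<bar> * (ennreal (s powr (a-1) * s powr (b-1)) * ennreal (Beta a b))
     = ennreal (s powr (a+b-1) * Beta a b)"
  proof -
    have "\<bar>s\<bar> * (s powr (a-1) * s powr (b-1)) = s powr (a+b-1)"
      using s by (simp add: powr_add[symmetric] powr_mult_base)
    moreover have "Beta a b \<ge> 0" using a b by (simp add: Beta_def)
    ultimately show ?thesis using s
      by (simp add: ennreal_mult[symmetric] mult.assoc)
  qed
  finally show ?thesis .
qed


definition Dfun :: "nat set \<Rightarrow> (nat \<Rightarrow> real) \<Rightarrow> real \<Rightarrow> real \<Rightarrow> (nat \<Rightarrow> real) \<Rightarrow> real" where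
  "Dfun A a c s x = (if (\<forall>i\<in>A. 0 < x i) \<and> sum x A < s
     then (\<Prod>i\<in>A. x i powr (a i - 1)) * (s - sum x A) powr (c - 1) else 0)"

lemma Dfun_nonneg: "Dfun A a c s x \<ge> 0"
  unfolding Dfun_def by (auto intro!: prod_nonneg mult_nonneg_nonneg)

lemma Dfun_measurable[measurable]:
  assumes "finite A"
  shows "(\<lambda>x. Dfun A a c s x) \<in> borel_measurable (Pi\<^sub>M A (\<lambda>_. lborel))"
  unfolding Dfun_def using assms by measurable

lemma Dfun_insert:
  assumes "b \<notin> A" "finite A"
  shows "Dfun (insert b A) a c s (x(b := y)) =
    (if 0 < y \<and> y < s then y powr (a b - 1) else 0) * Dfun A a c (s - y) x"
proof -
  have sA: "sum (x(b := y)) A = sum x A" using assms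
    by (intro sum.cong) auto
  have pA: "(\<Prod>i\<in>A. (x(b := y)) i powr (a i - 1)) = (\<Prod>i\<in>A. x i powr (a i - 1))"
    using assms by (intro prod.cong) auto
  have sI: "sum (x(b := y)) (insert b A) = y + sum x A" using assms sA by simp
  have pI: "(\<Prod>i\<in>insert b A. (x(b := y)) i powr (a i - 1)) = y powr (a b - 1) * (\<Prod>i\<in>A. x i powr (a i - 1))"
    using assms pA by simp
  have cond: "((\<forall>i\<in>insert b A. 0 < (x(b := y)) i) \<and> y + sum x A < s) \<longleftrightarrow>
     (0 < y \<and> y < s) \<and> ((\<forall>i\<in>A. 0 < x i) \<and> sum x A < s - y)"
  proof -
    have "(\<forall>i\<in>insert b A. 0 < (x(b := y)) i) \<longleftrightarrow> 0 < y \<and> (\<forall>i\<in>A. 0 < x i)"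
      using assms by (auto split: if_splits)
    moreover have "(\<forall>i\<in>A. 0 < x i) \<Longrightarrow> sum x A \<ge> 0" by (intro sum_nonneg) (auto intro: less_imp_le)
    ultimately show ?thesis by auto
  qed
  have e: "s - (y + sum x A) = s - y - sum x A" by simp
  show ?thesis
  proof (cases "(0 < y \<and> y < s) \<and> ((\<forall>i\<in>A. 0 < x i) \<and> sum x A < s - y)")
    case True
    then show ?thesis unfolding Dfun_def sI pI e using cond by (simp add: mult_ac)
  next
    case False
    then have "\<not> ((\<forall>i\<in>insert b A. 0 < (x(b := y)) i) \<and> y + sum x A < s)" using cond by blast
    then have l: "Dfun (insert b A) a c s (x(b := y)) = 0" unfolding Dfun_def sI by (rule if_not_P)
    have "(if 0 < y \<and> y < s then y powr (a b - 1) else 0) * Dfun A a c (s - y) x = 0"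
      using False unfolding Dfun_def by auto
    then show ?thesis using l by simp
  qed
qed

lemma dirichlet_integral:
  assumes "finite A" "\<forall>i\<in>A. a i > 0" "c > 0" "s > 0"
  shows "(\<integral>\<^sup>+x. ennreal (Dfun A a c s x) \<partial>Pi\<^sub>M A (\<lambda>_. lborel)) =
    ennreal (s powr (sum a A + c - 1) * (\<Prod>i\<in>A. Gamma (a i)) * Gamma c / Gamma (sum a A + c))"
  using assms
proof (induction A arbitrary: s rule: finite_induct)
  case (empty s)
  have "Gamma c > 0" using empty by (intro Gamma_real_pos) auto
  then have "Gamma c \<noteq> 0" by simp
  then show ?case using empty by (simp add: PiM_empty Dfun_def)
next
  case (insert b A s)
  interpret product_sigma_finite "\<lambda>_. lborel" by standard
  define K where "K = (\<Prod>i\<in>A. Gamma (a i)) * Gamma c / Gamma (sum a A + c)"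
  have ab: "a b > 0" using insert by auto
  have sAc: "sum a A + c > 0"
    using insert by (intro add_nonneg_pos sum_nonneg) (auto intro: less_imp_le)
  have Kpos: "K \<ge> 0" unfolding K_def using insert sAc
    by (intro divide_nonneg_pos mult_nonneg_nonneg prod_nonneg Gamma_real_pos[THEN less_imp_le]
        Gamma_real_pos) auto
  have "(\<integral>\<^sup>+x. ennreal (Dfun (insert b A) a c s x) \<partial>Pi\<^sub>M (insert b A) (\<lambda>_. lborel)) =
     (\<integral>\<^sup>+y. \<integral>\<^sup>+x. ennreal (Dfun (insert b A) a c s (x(b := y))) \<partial>Pi\<^sub>M A (\<lambda>_. lborel) \<partial>lborel)"
    using insert.hyps by (intro product_nn_integral_insert_rev) auto
  also have "\<dots> = (\<integral>\<^sup>+y. ennreal (if 0 < y \<and> y < s then y powr (a b - 1) else 0) *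
       \<integral>\<^sup>+x. ennreal (Dfun A a c (s - y) x) \<partial>Pi\<^sub>M A (\<lambda>_. lborel) \<partial>lborel)"
  proof (intro nn_integral_cong)
    fix y :: real
    have "(\<integral>\<^sup>+x. ennreal (Dfun (insert b A) a c s (x(b := y))) \<partial>Pi\<^sub>M A (\<lambda>_. lborel)) =
        (\<integral>\<^sup>+x. ennreal (if 0 < y \<and> y < s then y powr (a b - 1) else 0) * ennreal (Dfun A a c (s - y) x) \<partial>Pi\<^sub>M A (\<lambda>_. lborel))"
      using insert.hyps by (intro nn_integral_cong) (simp add: Dfun_insert ennreal_mult Dfun_nonneg)
    also have "\<dots> = ennreal (if 0 < y \<and> y < s then y powr (a b - 1) else 0) *
       \<integral>\<^sup>+x. ennreal (Dfun A a c (s - y) x) \<partial>Pi\<^sub>M A (\<lambda>_. lborel)"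
      using insert.hyps by (intro nn_integral_cmult) auto
    finally show "(\<integral>\<^sup>+x. ennreal (Dfun (insert b A) a c s (x(b := y))) \<partial>Pi\<^sub>M A (\<lambda>_. lborel)) = \<dots>" .
  qed
  also have "\<dots> = (\<integral>\<^sup>+y. ennreal (if 0 < y \<and> y < s then y powr (a b - 1) * (s - y) powr (sum a A + c - 1) else 0) * ennreal K \<partial>lborel)"
  proof (intro nn_integral_cong)
    fix y :: real
    show "ennreal (if 0 < y \<and> y < s then y powr (a b - 1) else 0) *
       (\<integral>\<^sup>+x. ennreal (Dfun A a c (s - y) x) \<partial>Pi\<^sub>M A (\<lambda>_. lborel)) =
       ennreal (if 0 < y \<and> y < s then y powr (a b - 1) * (s - y) powr (sum a A + c - 1) else 0) * ennreal K"
    proof (cases "0 < y \<and> y < s")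
      case True
      then have "(\<integral>\<^sup>+x. ennreal (Dfun A a c (s - y) x) \<partial>Pi\<^sub>M A (\<lambda>_. lborel)) =
         ennreal ((s - y) powr (sum a A + c - 1) * K)"
        using insert by (subst insert.IH) (auto simp: K_def mult_ac)
      then show ?thesis using True Kpos by (simp add: ennreal_mult mult_ac)
    next
      case False
      then have "(if 0 < y \<and> y < s then y powr (a b - 1) else 0) = 0"
        "(if 0 < y \<and> y < s then y powr (a b - 1) * (s - y) powr (sum a A + c - 1) else 0) = 0"
        by auto
      then show ?thesis by (simp only:) simp
    qed
  qed
  also have "\<dots> = (\<integral>\<^sup>+y. ennreal (if 0 < y \<and> y < s then y powr (a b - 1) * (s - y) powr (sum a A + c - 1) else 0) \<partial>lborel) * ennreal K"
    by (rule nn_integral_multc) measurable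
  also have "\<dots> = ennreal (s powr (a b + (sum a A + c) - 1) * Beta (a b) (sum a A + c)) * ennreal K"
    using beta_1d[OF ab sAc insert.prems(3)] by simp
  also have "\<dots> = ennreal (s powr (sum a (insert b A) + c - 1) * (\<Prod>i\<in>insert b A. Gamma (a i)) * Gamma c / Gamma (sum a (insert b A) + c))"
  proof -
    have "Gamma (sum a A + c) \<noteq> 0" using Gamma_real_pos[OF sAc] by simp
    then have "Beta (a b) (sum a A + c) * K = (\<Prod>i\<in>insert b A. Gamma (a i)) * Gamma c / Gamma (a b + (sum a A + c))"
      using insert.hyps by (simp add: Beta_def K_def field_simps)
    moreover have "Beta (a b) (sum a A + c) \<ge> 0" using ab sAc
      by (simp add: Beta_def Gamma_real_pos less_imp_le)
    ultimately have "s powr (a b + (sum a A + c) - 1) * Beta (a b) (sum a A + c) * K =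
        s powr (sum a (insert b A) + c - 1) * (\<Prod>i\<in>insert b A. Gamma (a i)) * Gamma c / Gamma (sum a (insert b A) + c)"
    proof -
      assume h: "Beta (a b) (sum a A + c) * K = (\<Prod>i\<in>insert b A. Gamma (a i)) * Gamma c / Gamma (a b + (sum a A + c))"
      have "s powr (a b + (sum a A + c) - 1) * Beta (a b) (sum a A + c) * K =
        s powr (a b + (sum a A + c) - 1) * (Beta (a b) (sum a A + c) * K)" by (simp only: mult.assoc)
      also have "\<dots> = s powr (a b + (sum a A + c) - 1) * ((\<Prod>i\<in>insert b A. Gamma (a i)) * Gamma c / Gamma (a b + (sum a A + c)))"
        by (simp only: h)
      also have "a b + (sum a A + c) = sum a (insert b A) + c" using insert.hyps by simp
      finally show ?thesis using insert.hyps by (simp add: mult.assoc add.assoc)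
    qed
    then show ?thesis using Kpos \<open>Beta (a b) (sum a A + c) \<ge> 0\<close>
      by (simp add: ennreal_mult[symmetric])
  qed
  finally show ?case .
qed


lemma prod_nth_count:
  fixes f :: "nat \<Rightarrow> real"
  assumes "set ts \<subseteq> U" "finite U"
  shows "(\<Prod>i<length ts. f (ts ! i)) = (\<Prod>u\<in>U. f u ^ count_list ts u)"
  using assms(1)
proof (induction ts)
  case Nil
  then show ?case by simp
next
  case (Cons y ts)
  have yU: "y \<in> U" using Cons.prems by auto
  have "(\<Prod>i<length (y # ts). f ((y # ts) ! i)) = f y * (\<Prod>i<length ts. f (ts ! i))"
    unfolding length_Cons prod.lessThan_Suc_shift by simp
  also have "\<dots> = f y * (\<Prod>u\<in>U. f u ^ count_list ts u)" using Cons by simp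
  also have "\<dots> = (\<Prod>u\<in>U. (if y = u then f u else 1)) * (\<Prod>u\<in>U. f u ^ count_list ts u)"
    using yU assms(2) by (simp add: prod.delta)
  also have "\<dots> = (\<Prod>u\<in>U. f u ^ count_list (y # ts) u)"
    unfolding prod.distrib[symmetric] by (intro prod.cong) auto
  finally show ?case .
qed

lemma atLeastAtMost_insert_top: "(1::nat) \<le> Y \<Longrightarrow> {1..Y} = insert Y {1..<Y}"
  by auto

definition Gclosed :: "nat \<Rightarrow> real \<Rightarrow> nat list \<Rightarrow> real" where
  "Gclosed Y \<alpha> ts = Gamma (real Y * \<alpha>) / Gamma \<alpha> ^ Y *
     (\<Prod>u\<in>{1..Y}. Gamma (\<alpha> + real (count_list ts u))) / Gamma (real Y * \<alpha> + real (length ts))"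

lemma bayes_prob_closed:
  assumes Y: "Y \<ge> 2" and al: "\<alpha> > 0" and ts: "set ts \<subseteq> {1..Y}"
  shows "bayes_prob Y \<alpha> ts = Gclosed Y \<alpha> ts"
proof -
  define a where "a u = \<alpha> + real (count_list ts u)" for u
  define Cst where "Cst = Gamma (real Y * \<alpha>) / (Gamma \<alpha>) ^ Y"
  have apos: "\<forall>u. a u > 0" using al unfolding a_def by (simp add: add_pos_nonneg)
  have Cst: "Cst \<ge> 0" unfolding Cst_def using al Y
    by (intro divide_nonneg_pos zero_le_power less_imp_le Gamma_real_pos zero_less_power) auto
  have YI: "{1..Y} = insert Y {1..<Y}" "Y \<notin> {1..<Y}" using Y by auto
  have pt: "dir_density Y \<alpha> x * (\<Prod>i<length ts. theta_of Y x (ts ! i)) = Cst * Dfun {1..<Y} a (a Y) 1 x" for x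
  proof (cases "\<forall>u\<in>{1..Y}. 0 < theta_of Y x u")
    case True
    have thY: "theta_of Y x Y = 1 - sum x {1..<Y}" by (simp add: theta_of_def)
    have thi: "theta_of Y x i = x i" if "i \<in> {1..<Y}" for i using that by (simp add: theta_of_def)
    have c1: "\<forall>i\<in>{1..<Y}. 0 < x i"
    proof
      fix i assume i: "i \<in> {1..<Y}"
      then have i2: "i \<in> {1..Y}" by auto
      show "0 < x i" using True[rule_format, OF i2] thi[OF i] by simp
    qed
    have "Y \<in> {1..Y}" using Y by auto
    then have c2: "sum x {1..<Y} < 1" using True[rule_format, of Y] thY by simp
    have "dir_density Y \<alpha> x * (\<Prod>i<length ts. theta_of Y x (ts ! i)) =
       Cst * ((\<Prod>u\<in>{1..Y}. theta_of Y x u powr (\<alpha> - 1)) * (\<Prod>u\<in>{1..Y}. theta_of Y x u ^ count_list ts u))"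
      using True by (simp add: dir_density_def Cst_def prod_nth_count[OF ts])
    also have "(\<Prod>u\<in>{1..Y}. theta_of Y x u powr (\<alpha> - 1)) * (\<Prod>u\<in>{1..Y}. theta_of Y x u ^ count_list ts u)
       = (\<Prod>u\<in>{1..Y}. theta_of Y x u powr (a u - 1))"
      unfolding prod.distrib[symmetric]
    proof (intro prod.cong refl)
      fix u assume "u \<in> {1..Y}"
      then have "theta_of Y x u > 0" using True by auto
      then show "theta_of Y x u powr (\<alpha> - 1) * theta_of Y x u ^ count_list ts u = theta_of Y x u powr (a u - 1)"
        by (simp add: a_def powr_realpow[symmetric] powr_add[symmetric] algebra_simps)
    qed
    also have "\<dots> = (\<Prod>i\<in>{1..<Y}. x i powr (a i - 1)) * (1 - sum x {1..<Y}) powr (a Y - 1)"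
      unfolding YI(1) using YI(2) thY thi by (simp add: mult.commute)
    also have "\<dots> = Dfun {1..<Y} a (a Y) 1 x" unfolding Dfun_def using c1 c2 by simp
    finally show ?thesis .
  next
    case False
    have "\<not> ((\<forall>i\<in>{1..<Y}. 0 < x i) \<and> sum x {1..<Y} < 1)"
    proof
      assume h: "(\<forall>i\<in>{1..<Y}. 0 < x i) \<and> sum x {1..<Y} < 1"
      have "\<forall>u\<in>{1..Y}. 0 < theta_of Y x u"
        using h by (auto simp: theta_of_def)
      with False show False by simp
    qed
    then have "Dfun {1..<Y} a (a Y) 1 x = 0" unfolding Dfun_def by (rule if_not_P)
    moreover have "dir_density Y \<alpha> x = 0" using False unfolding dir_density_def by (rule if_not_P)
    ultimately show ?thesis by simp
  qed
  have "bayes_prob Y \<alpha> ts = enn2real (\<integral>\<^sup>+ x. ennreal Cst * ennreal (Dfun {1..<Y} a (a Y) 1 x) \<partial>(\<Pi>\<^sub>M u\<in>{1..<Y}. lborel))"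
    unfolding bayes_prob_def pt using Cst by (simp add: ennreal_mult Dfun_nonneg)
  also have "\<dots> = enn2real (ennreal Cst * (\<integral>\<^sup>+ x. ennreal (Dfun {1..<Y} a (a Y) 1 x) \<partial>(\<Pi>\<^sub>M u\<in>{1..<Y}. lborel)))"
    by (subst nn_integral_cmult) auto
  also have "(\<integral>\<^sup>+ x. ennreal (Dfun {1..<Y} a (a Y) 1 x) \<partial>(\<Pi>\<^sub>M u\<in>{1..<Y}. lborel)) =
     ennreal (1 powr (sum a {1..<Y} + a Y - 1) * (\<Prod>i\<in>{1..<Y}. Gamma (a i)) * Gamma (a Y) / Gamma (sum a {1..<Y} + a Y))"
    using apos by (intro dirichlet_integral) auto
  also have "sum a {1..<Y} + a Y = real Y * \<alpha> + real (length ts)"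
  proof -
    have "sum a {1..<Y} + a Y = sum a {1..Y}" unfolding YI(1) using YI(2) by simp
    also have "\<dots> = real Y * \<alpha> + real (sum (count_list ts) {1..Y})"
      unfolding a_def by (simp add: sum.distrib)
    also have "sum (count_list ts) {1..Y} = length ts" using ts by (simp add: sum_count_set)
    finally show ?thesis .
  qed
  also have "1 powr (real Y * \<alpha> + real (length ts) - 1) * (\<Prod>i\<in>{1..<Y}. Gamma (a i)) * Gamma (a Y) = (\<Prod>u\<in>{1..Y}. Gamma (a u))"
    unfolding YI(1) using YI(2) by (simp add: mult.commute)
  finally have "bayes_prob Y \<alpha> ts = enn2real (ennreal Cst * ennreal ((\<Prod>u\<in>{1..Y}. Gamma (a u)) / Gamma (real Y * \<alpha> + real (length ts))))"
    by simp
  also have "\<dots> = Cst * ((\<Prod>u\<in>{1..Y}. Gamma (a u)) / Gamma (real Y * \<alpha> + real (length ts)))"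
  proof -
    have "(\<Prod>u\<in>{1..Y}. Gamma (a u)) / Gamma (real Y * \<alpha> + real (length ts)) \<ge> 0"
    proof -
      have "real Y * \<alpha> + real (length ts) > 0" using Y al by (intro add_pos_nonneg) auto
      then show ?thesis using apos
        by (intro divide_nonneg_pos prod_nonneg less_imp_le[OF Gamma_real_pos] Gamma_real_pos) auto
    qed
    then have "Cst * ((\<Prod>u\<in>{1..Y}. Gamma (a u)) / Gamma (real Y * \<alpha> + real (length ts))) \<ge> 0"
      using Cst by (rule mult_nonneg_nonneg[rotated])
    with \<open>0 \<le> (\<Prod>u\<in>{1..Y}. Gamma (a u)) / Gamma (real Y * \<alpha> + real (length ts))\<close> Cst show ?thesis
      by (simp only: ennreal_mult[symmetric] enn2real_ennreal)
  qed
  finally show ?thesis unfolding Gclosed_def Cst_def a_def by simp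
qed


lemma Gclosed_pos:
  assumes "Y \<ge> 1" "\<alpha> > 0"
  shows "Gclosed Y \<alpha> ts > 0"
proof -
  have "real Y * \<alpha> + real (length ts) > 0" using assms by (intro add_pos_nonneg) auto
  moreover have "real Y * \<alpha> > 0" using assms by simp
  ultimately show ?thesis unfolding Gclosed_def using assms
    by (intro divide_pos_pos mult_pos_pos prod_pos zero_less_power Gamma_real_pos add_pos_nonneg) auto
qed

definition wq :: "nat \<Rightarrow> real \<Rightarrow> nat list \<Rightarrow> nat \<Rightarrow> real" where
  "wq Y \<alpha> ts y = (\<alpha> + real (count_list ts y)) / (real Y * \<alpha> + real (length ts))"

lemma Gclosed_snoc:
  assumes "Y \<ge> 1" "\<alpha> > 0" "y \<in> {1..Y}"
  shows "Gclosed Y \<alpha> (ts @ [y]) = Gclosed Y \<alpha> ts * wq Y \<alpha> ts y"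
proof -
  define n where "n u = \<alpha> + real (count_list ts u)" for u
  have npos: "n u > 0" for u using assms unfolding n_def by (simp add: add_pos_nonneg)
  define D where "D = real Y * \<alpha> + real (length ts)"
  have Dpos: "D > 0" unfolding D_def using assms by (intro add_pos_nonneg) auto
  have U: "{1..Y} = insert y ({1..Y} - {y})" "y \<notin> {1..Y} - {y}" using assms by auto
  have "(\<Prod>u\<in>{1..Y}. Gamma (\<alpha> + real (count_list (ts @ [y]) u))) =
        (\<Prod>u\<in>{1..Y}. Gamma (n u + (if u = y then 1 else 0)))"
    by (intro prod.cong) (auto simp: n_def add_ac)
  also have "\<dots> = Gamma (n y + 1) * (\<Prod>u\<in>{1..Y} - {y}. Gamma (n u))"
    by (subst U(1), subst prod.insert) (use U(2) in \<open>auto intro!: prod.cong\<close>)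
  also have "Gamma (n y + 1) = n y * Gamma (n y)"
    using npos[of y] by (intro Gamma_plus1) (auto elim!: nonpos_Ints_cases)
  also have "n y * Gamma (n y) * (\<Prod>u\<in>{1..Y} - {y}. Gamma (n u)) = n y * (\<Prod>u\<in>{1..Y}. Gamma (n u))"
    by (subst (2) U(1), subst prod.insert) (use U(2) in auto)
  finally have P: "(\<Prod>u\<in>{1..Y}. Gamma (\<alpha> + real (count_list (ts @ [y]) u))) = n y * (\<Prod>u\<in>{1..Y}. Gamma (n u))" .
  have "Gamma (real Y * \<alpha> + real (length (ts @ [y]))) = Gamma (D + 1)"
    by (simp add: D_def add_ac)
  also have "\<dots> = D * Gamma D"
    using Dpos by (intro Gamma_plus1) (auto elim!: nonpos_Ints_cases)
  finally have Q: "Gamma (real Y * \<alpha> + real (length (ts @ [y]))) = D * Gamma D" .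
  have "Gamma D > 0" using Dpos by simp
  then show ?thesis unfolding Gclosed_def P Q wq_def
    using Dpos by (simp add: n_def D_def field_simps)
qed

lemma wq_sum:
  assumes "Y \<ge> 1" "\<alpha> > 0" "set ts \<subseteq> {1..Y}"
  shows "(\<Sum>y\<in>{1..Y}. wq Y \<alpha> ts y) = 1"
proof -
  have D: "real Y * \<alpha> + real (length ts) > 0" using assms by (intro add_pos_nonneg) auto
  have "(\<Sum>y\<in>{1..Y}. wq Y \<alpha> ts y) = (\<Sum>y\<in>{1..Y}. \<alpha> + real (count_list ts y)) / (real Y * \<alpha> + real (length ts))"
    unfolding wq_def by (simp add: sum_divide_distrib)
  also have "(\<Sum>y\<in>{1..Y}. \<alpha> + real (count_list ts y)) = real Y * \<alpha> + real (length ts)"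
    using assms by (simp add: sum.distrib sum_count_set flip: of_nat_sum)
  finally show ?thesis using D by simp
qed

lemma finite_train_sets: "finite (train_sets Y l)"
  unfolding train_sets_def using finite_lists_length_eq[of "{1..Y}" l] by (simp add: conj_commute)

lemma train_sets_Suc:
  "train_sets Y (Suc l) = (\<lambda>(ts, y). ts @ [y]) ` (train_sets Y l \<times> {1..Y})"
proof (intro equalityI subsetI)
  fix xs assume "xs \<in> train_sets Y (Suc l)"
  then have xs: "length xs = Suc l" "set xs \<subseteq> {1..Y}" by (auto simp: train_sets_def)
  then obtain ts y where "xs = ts @ [y]" by (metis length_Suc_conv_rev)
  with xs show "xs \<in> (\<lambda>(ts, y). ts @ [y]) ` (train_sets Y l \<times> {1..Y})"
    by (auto simp: train_sets_def image_iff)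
qed (auto simp: train_sets_def)

lemma Gclosed_Nil:
  assumes "Y \<ge> 1" "\<alpha> > 0"
  shows "Gclosed Y \<alpha> [] = 1"
proof -
  have "Gamma \<alpha> > 0" "Gamma (real Y * \<alpha>) > 0" using assms by auto
  then show ?thesis unfolding Gclosed_def by simp
qed

lemma Gclosed_sum:
  assumes "Y \<ge> 1" "\<alpha> > 0"
  shows "(\<Sum>ts\<in>train_sets Y l. Gclosed Y \<alpha> ts) = 1"
proof (induction l)
  case 0
  have "train_sets Y 0 = {[]}" by (auto simp: train_sets_def)
  then show ?case using Gclosed_Nil[OF assms] by simp
next
  case (Suc l)
  have inj: "inj_on (\<lambda>(ts, y). ts @ [y]) (train_sets Y l \<times> {1..Y})"
    by (auto simp: inj_on_def)
  have "(\<Sum>ts\<in>train_sets Y (Suc l). Gclosed Y \<alpha> ts) =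
        (\<Sum>(ts, y)\<in>train_sets Y l \<times> {1..Y}. Gclosed Y \<alpha> (ts @ [y]))"
    unfolding train_sets_Suc by (subst sum.reindex[OF inj]) (simp add: case_prod_unfold)
  also have "\<dots> = (\<Sum>ts\<in>train_sets Y l. \<Sum>y\<in>{1..Y}. Gclosed Y \<alpha> (ts @ [y]))"
    by (subst sum.cartesian_product) simp
  also have "\<dots> = (\<Sum>ts\<in>train_sets Y l. Gclosed Y \<alpha> ts * (\<Sum>y\<in>{1..Y}. wq Y \<alpha> ts y))"
    using assms by (intro sum.cong refl) (simp add: Gclosed_snoc sum_distrib_left)
  also have "\<dots> = (\<Sum>ts\<in>train_sets Y l. Gclosed Y \<alpha> ts)"
  proof (intro sum.cong refl)
    fix ts assume "ts \<in> train_sets Y l"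
    then have "set ts \<subseteq> {1..Y}" by (simp add: train_sets_def)
    show "Gclosed Y \<alpha> ts * (\<Sum>y\<in>{1..Y}. wq Y \<alpha> ts y) = Gclosed Y \<alpha> ts"
      by (simp only: wq_sum[OF assms \<open>set ts \<subseteq> {1..Y}\<close>] mult_1_right)
  qed
  finally show ?case using Suc by simp
qed


lemma ereal_sum_not_inf:
  fixes g :: "'a \<Rightarrow> ereal"
  shows "finite A \<Longrightarrow> (\<forall>i\<in>A. g i \<noteq> \<infinity>) \<Longrightarrow> sum g A \<noteq> \<infinity>"
  by (induction A rule: finite_induct) auto

lemma ereal_sum_minf:
  fixes g :: "'a \<Rightarrow> ereal"
  assumes "finite A" "\<forall>i\<in>A. g i \<noteq> \<infinity>" "\<exists>i\<in>A. g i = -\<infinity>"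
  shows "sum g A = -\<infinity>"
  using assms
proof (induction A rule: finite_induct)
  case empty
  then show ?case by simp
next
  case (insert x F)
  have nF: "sum g F \<noteq> \<infinity>" using insert ereal_sum_not_inf by auto
  show ?case
  proof (cases "g x = -\<infinity>")
    case True
    then show ?thesis using insert nF by simp
  next
    case False
    then have "sum g F = -\<infinity>" using insert by auto
    then show ?thesis using insert by simp
  qed
qed

lemma ln_ext_not_inf: "ln_ext v \<noteq> \<infinity>"
  by (simp add: ln_ext_def)


theorem proposition4:
  fixes Y l :: nat and \<alpha> :: real
  assumes "Y \<ge> 2" and "\<alpha> > 0"
  defines "e0 \<equiv> (\<lambda>ts y'. (1 / real Y) * ((real l + real Y * \<alpha>) / (real (count_list ts y') + \<alpha>)))"
  shows "valid_bayes Y \<alpha> l e0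
    \<and> (\<forall>f. valid_bayes Y \<alpha> l f \<longrightarrow> log_obj Y \<alpha> l f \<le> log_obj Y \<alpha> l e0)
    \<and> (\<forall>f. valid_bayes Y \<alpha> l f \<and> log_obj Y \<alpha> l f = log_obj Y \<alpha> l e0 \<longrightarrow>
          (\<forall>ts\<in>train_sets Y l. \<forall>y'\<in>{1..Y}. f ts y' = e0 ts y'))"
proof -
  note Y = assms(1) and al = assms(2)
  have Y1: "Y \<ge> 1" using Y by simp
  define T where "T = train_sets Y l"
  define G where "G = Gclosed Y \<alpha>"
  define w where "w = wq Y \<alpha>"
  have finT: "finite T" unfolding T_def by (rule finite_train_sets)
  have Tprop: "length ts = l" "set ts \<subseteq> {1..Y}" if "ts \<in> T" for ts
    using that by (auto simp: T_def train_sets_def)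
  have Gpos: "G ts > 0" for ts unfolding G_def using Gclosed_pos[OF Y1 al] .
  have sumG: "(\<Sum>ts\<in>T. G ts) = 1" unfolding T_def G_def by (rule Gclosed_sum[OF Y1 al])
  have q: "bayes_prob Y \<alpha> (ts @ [y]) = G ts * w ts y" if "ts \<in> T" "y \<in> {1..Y}" for ts y
  proof -
    have "set (ts @ [y]) \<subseteq> {1..Y}" using Tprop(2)[OF that(1)] that(2) by auto
    then show ?thesis unfolding G_def w_def
      using bayes_prob_closed[OF Y al] Gclosed_snoc[OF Y1 al that(2)] by simp
  qed
  have Dpos: "real Y * \<alpha> + real l > 0" using Y al by (intro add_pos_nonneg) auto
  have wpos: "w ts y > 0" if "ts \<in> T" for ts y
    unfolding w_def wq_def using Tprop[OF that] al Dpos by (simp add: add_pos_nonneg)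
  have wsum: "(\<Sum>y\<in>{1..Y}. w ts y) = 1" if "ts \<in> T" for ts
    unfolding w_def using wq_sum[OF Y1 al Tprop(2)[OF that]] .
  have e0w: "e0 ts y = 1 / (real Y * w ts y)" if "ts \<in> T" for ts y
    unfolding e0_def w_def wq_def using Tprop[OF that] by (simp add: add_ac mult_ac)
  have e0pos: "e0 ts y > 0" if "ts \<in> T" for ts y
    using e0w[OF that] wpos[OF that] Y by simp
  have qsum: "(\<Sum>y\<in>{1..Y}. bayes_prob Y \<alpha> (ts @ [y])) = G ts" if "ts \<in> T" for ts
    using q[OF that] wsum[OF that] by (simp add: sum_distrib_left[symmetric])

  define Lr where "Lr f = (\<Sum>ts\<in>T. G ts * (\<Sum>y'\<in>{1..Y}. ln (f ts y')))" for f :: "nat list \<Rightarrow> nat \<Rightarrow> real"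
  have log_pos: "log_obj Y \<alpha> l f = ereal (Lr f)"
    if fpos: "\<forall>ts\<in>T. \<forall>y'\<in>{1..Y}. f ts y' > 0" for f
  proof -
    have "log_obj Y \<alpha> l f = (\<Sum>ts\<in>T. ereal (G ts * (\<Sum>y'\<in>{1..Y}. ln (f ts y'))))"
      unfolding log_obj_def T_def[symmetric]
    proof (intro sum.cong refl)
      fix ts assume ts: "ts \<in> T"
      have "(\<Sum>y'\<in>{1..Y}. ln_ext (f ts y')) = ereal (\<Sum>y'\<in>{1..Y}. ln (f ts y'))"
      proof -
        have "(\<Sum>y'\<in>{1..Y}. ln_ext (f ts y')) = (\<Sum>y'\<in>{1..Y}. ereal (ln (f ts y')))"
        proof (intro sum.cong refl)
          fix y' assume "y' \<in> {1..Y}"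
          then have "f ts y' > 0" using fpos ts by blast
          then show "ln_ext (f ts y') = ereal (ln (f ts y'))" by (simp add: ln_ext_def)
        qed
        then show ?thesis by simp
      qed
      then have "(\<Sum>y\<in>{1..Y}. ereal (bayes_prob Y \<alpha> (ts @ [y])) * (\<Sum>y'\<in>{1..Y}. ln_ext (f ts y'))) =
          ereal ((\<Sum>y\<in>{1..Y}. bayes_prob Y \<alpha> (ts @ [y])) * (\<Sum>y'\<in>{1..Y}. ln (f ts y')))"
        by (simp add: sum_distrib_right)
      then show "(\<Sum>y\<in>{1..Y}. ereal (bayes_prob Y \<alpha> (ts @ [y])) * (\<Sum>y'\<in>{1..Y}. ln_ext (f ts y'))) =
          ereal (G ts * (\<Sum>y'\<in>{1..Y}. ln (f ts y')))" using qsum[OF ts] by simp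
    qed
    then show ?thesis unfolding Lr_def by simp
  qed
  have log_zero: "log_obj Y \<alpha> l f = -\<infinity>"
    if fz: "\<exists>ts\<in>T. \<exists>y'\<in>{1..Y}. f ts y' = 0" for f
  proof -
    have terms: "(\<Sum>y\<in>{1..Y}. ereal (bayes_prob Y \<alpha> (ts @ [y])) * (\<Sum>y'\<in>{1..Y}. ln_ext (f ts y'))) \<noteq> \<infinity>"
      if ts: "ts \<in> T" for ts
    proof (rule ereal_sum_not_inf, simp, intro ballI)
      fix y assume y: "y \<in> {1..Y}"
      have S: "(\<Sum>y'\<in>{1..Y}. ln_ext (f ts y')) \<noteq> \<infinity>"
        by (rule ereal_sum_not_inf) (auto simp: ln_ext_not_inf)
      have "bayes_prob Y \<alpha> (ts @ [y]) > 0" using q[OF ts y] Gpos wpos[OF ts] by simp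
      then show "ereal (bayes_prob Y \<alpha> (ts @ [y])) * (\<Sum>y'\<in>{1..Y}. ln_ext (f ts y')) \<noteq> \<infinity>"
        using S by (cases "(\<Sum>y'\<in>{1..Y}. ln_ext (f ts y'))") auto
    qed
    obtain ts0 y0 where ts0: "ts0 \<in> T" "y0 \<in> {1..Y}" "f ts0 y0 = 0" using fz by blast
    have S0: "(\<Sum>y'\<in>{1..Y}. ln_ext (f ts0 y')) = -\<infinity>"
      by (rule ereal_sum_minf) (use ts0 in \<open>auto simp: ln_ext_not_inf ln_ext_def\<close>)
    have "(\<Sum>y\<in>{1..Y}. ereal (bayes_prob Y \<alpha> (ts0 @ [y])) * (\<Sum>y'\<in>{1..Y}. ln_ext (f ts0 y'))) = -\<infinity>"
    proof (rule ereal_sum_minf)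
      show "\<forall>i\<in>{1..Y}. ereal (bayes_prob Y \<alpha> (ts0 @ [i])) * (\<Sum>y'\<in>{1..Y}. ln_ext (f ts0 y')) \<noteq> \<infinity>"
      proof
        fix i assume i: "i \<in> {1..Y}"
        have "bayes_prob Y \<alpha> (ts0 @ [i]) > 0" using q[OF ts0(1) i] Gpos wpos[OF ts0(1)] by simp
        then show "ereal (bayes_prob Y \<alpha> (ts0 @ [i])) * (\<Sum>y'\<in>{1..Y}. ln_ext (f ts0 y')) \<noteq> \<infinity>"
          using S0 by simp
      qed
      have "bayes_prob Y \<alpha> (ts0 @ [y0]) > 0" using q[OF ts0(1,2)] Gpos wpos[OF ts0(1)] by simp
      then show "\<exists>i\<in>{1..Y}. ereal (bayes_prob Y \<alpha> (ts0 @ [i])) * (\<Sum>y'\<in>{1..Y}. ln_ext (f ts0 y')) = -\<infinity>"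
        using S0 ts0(2) by auto
    qed simp
    then show ?thesis unfolding log_obj_def T_def[symmetric]
      using terms ts0(1) finT by (intro ereal_sum_minf) auto
  qed

  have expect_eq: "bayes_expect Y \<alpha> l f = (\<Sum>ts\<in>T. \<Sum>y\<in>{1..Y}. G ts * w ts y * f ts y)" for f
    unfolding bayes_expect_def T_def[symmetric] by (intro sum.cong refl) (simp add: q)
  have valid_e0: "valid_bayes Y \<alpha> l e0"
  proof -
    have "e_variable Y l e0" unfolding e_variable_def e0_def using al
      by (auto intro!: mult_nonneg_nonneg divide_nonneg_nonneg add_nonneg_nonneg)
    moreover have "bayes_expect Y \<alpha> l e0 = 1"
    proof -
      have "bayes_expect Y \<alpha> l e0 = (\<Sum>ts\<in>T. \<Sum>y\<in>{1..Y}. G ts / real Y)"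
        unfolding expect_eq
      proof (intro sum.cong refl)
        fix ts y assume ts: "ts \<in> T"
        show "G ts * w ts y * e0 ts y = G ts / real Y"
          using e0w[OF ts, of y] wpos[OF ts, of y] by simp
      qed
      also have "\<dots> = (\<Sum>ts\<in>T. G ts)" using Y by simp
      finally show ?thesis using sumG by simp
    qed
    ultimately show ?thesis unfolding valid_bayes_def by simp
  qed
  have e0_log: "log_obj Y \<alpha> l e0 = ereal (Lr e0)"
    using e0pos by (intro log_pos) auto

  have key: "Lr f \<le> Lr e0 \<and> (Lr f = Lr e0 \<longrightarrow> (\<forall>ts\<in>T. \<forall>y'\<in>{1..Y}. f ts y' = e0 ts y'))"
    if fv: "valid_bayes Y \<alpha> l f" and fpos: "\<forall>ts\<in>T. \<forall>y'\<in>{1..Y}. f ts y' > 0" for f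
  proof -
    define r where "r ts y = f ts y / e0 ts y" for ts y
    have rpos: "r ts y > 0" if "ts \<in> T" "y \<in> {1..Y}" for ts y
      unfolding r_def using fpos that e0pos[OF that(1)] by simp
    define d where "d ts y = r ts y - 1 - ln (r ts y)" for ts y
    have dnn: "d ts y \<ge> 0" if "ts \<in> T" "y \<in> {1..Y}" for ts y
      unfolding d_def using ln_le_minus_one[OF rpos[OF that]] by simp
    have inner: "(\<Sum>y\<in>{1..Y}. ln (f ts y)) - (\<Sum>y\<in>{1..Y}. ln (e0 ts y)) = (\<Sum>y\<in>{1..Y}. ln (r ts y))"
      if ts: "ts \<in> T" for ts
      unfolding sum_subtractf[symmetric] r_def
    proof (intro sum.cong refl)
      fix y assume y: "y \<in> {1..Y}"
      have "f ts y > 0" using fpos ts y by blast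
      then show "ln (f ts y) - ln (e0 ts y) = ln (f ts y / e0 ts y)"
        using e0pos[OF ts, of y] by (simp add: ln_div)
    qed
    have diff: "Lr f - Lr e0 = (\<Sum>ts\<in>T. G ts * (\<Sum>y\<in>{1..Y}. ln (r ts y)))"
    proof -
      have "Lr f - Lr e0 = (\<Sum>ts\<in>T. G ts * ((\<Sum>y\<in>{1..Y}. ln (f ts y)) - (\<Sum>y\<in>{1..Y}. ln (e0 ts y))))"
        unfolding Lr_def by (simp add: sum_subtractf right_diff_distrib)
      also have "\<dots> = (\<Sum>ts\<in>T. G ts * (\<Sum>y\<in>{1..Y}. ln (r ts y)))"
        using inner by (intro sum.cong refl) simp
      finally show ?thesis .
    qed
    have rsum: "(\<Sum>ts\<in>T. G ts * (\<Sum>y\<in>{1..Y}. r ts y)) = real Y * bayes_expect Y \<alpha> l f"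
      unfolding expect_eq sum_distrib_left
    proof (intro sum.cong refl)
      fix ts y assume ts: "ts \<in> T"
      show "G ts * r ts y = real Y * (G ts * w ts y * f ts y)"
        unfolding r_def e0w[OF ts] using wpos[OF ts, of y] Y by (simp add: field_simps)
    qed
    have onesum: "(\<Sum>ts\<in>T. G ts * (\<Sum>y\<in>{1..Y}. (1::real))) = real Y"
      using sumG by (simp add: sum_distrib_right[symmetric] mult.commute)
    have dsum: "(\<Sum>ts\<in>T. G ts * (\<Sum>y\<in>{1..Y}. d ts y)) =
        real Y * bayes_expect Y \<alpha> l f - real Y - (Lr f - Lr e0)"
    proof -
      have "(\<Sum>ts\<in>T. G ts * (\<Sum>y\<in>{1..Y}. d ts y)) = (\<Sum>ts\<in>T. G ts * (\<Sum>y\<in>{1..Y}. r ts y))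
          - (\<Sum>ts\<in>T. G ts * (\<Sum>y\<in>{1..Y}. (1::real))) - (\<Sum>ts\<in>T. G ts * (\<Sum>y\<in>{1..Y}. ln (r ts y)))"
        unfolding d_def by (simp only: sum_subtractf right_diff_distrib)
      then show ?thesis using rsum onesum diff by linarith
    qed
    have E: "bayes_expect Y \<alpha> l f \<le> 1" using fv unfolding valid_bayes_def by simp
    have dnn2: "(\<Sum>ts\<in>T. G ts * (\<Sum>y\<in>{1..Y}. d ts y)) \<ge> 0"
      using dnn Gpos by (intro sum_nonneg mult_nonneg_nonneg sum_nonneg) (auto intro: less_imp_le)
    have "real Y * bayes_expect Y \<alpha> l f \<le> real Y" using E Y by simp
    then have le: "Lr f \<le> Lr e0" using dsum dnn2 by linarith
    moreover have "\<forall>ts\<in>T. \<forall>y'\<in>{1..Y}. f ts y' = e0 ts y'" if eq: "Lr f = Lr e0"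
    proof (intro ballI)
      fix ts y assume ts: "ts \<in> T" and y: "y \<in> {1..Y}"
      have "(\<Sum>ts\<in>T. G ts * (\<Sum>y\<in>{1..Y}. d ts y)) = 0"
        using dsum dnn2 eq \<open>real Y * bayes_expect Y \<alpha> l f \<le> real Y\<close> by linarith
      moreover have nn: "\<And>t. t \<in> T \<Longrightarrow> 0 \<le> G t * (\<Sum>y\<in>{1..Y}. d t y)"
        using dnn Gpos by (intro mult_nonneg_nonneg sum_nonneg) (auto intro: less_imp_le)
      moreover have "(\<Sum>ts\<in>T. G ts * (\<Sum>y\<in>{1..Y}. d ts y)) = 0 \<longleftrightarrow> (\<forall>ts\<in>T. G ts * (\<Sum>y\<in>{1..Y}. d ts y) = 0)"
        by (rule sum_nonneg_eq_0_iff[OF finT nn])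
      ultimately have "\<forall>ts\<in>T. G ts * (\<Sum>y\<in>{1..Y}. d ts y) = 0" by blast
      then have "G ts * (\<Sum>y\<in>{1..Y}. d ts y) = 0" using ts by blast
      then have "(\<Sum>y\<in>{1..Y}. d ts y) = 0" using Gpos[of ts] by simp
      moreover have "(\<Sum>y\<in>{1..Y}. d ts y) = 0 \<longleftrightarrow> (\<forall>y\<in>{1..Y}. d ts y = 0)"
        by (rule sum_nonneg_eq_0_iff) (auto intro: dnn[OF ts])
      ultimately have "\<forall>y\<in>{1..Y}. d ts y = 0" by blast
      then have "ln (r ts y) = r ts y - 1" using y unfolding d_def by simp
      then have "r ts y = 1" using ln_eq_minus_one rpos[OF ts y] by blast
      then show "f ts y = e0 ts y" unfolding r_def using e0pos[OF ts, of y] by simp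
    qed
    ultimately show ?thesis by blast
  qed

  show ?thesis
  proof (intro conjI allI impI)
    show "valid_bayes Y \<alpha> l e0" by (rule valid_e0)
  next
    fix f assume fv: "valid_bayes Y \<alpha> l f"
    show "log_obj Y \<alpha> l f \<le> log_obj Y \<alpha> l e0"
    proof (cases "\<forall>ts\<in>T. \<forall>y'\<in>{1..Y}. f ts y' > 0")
      case True
      then show ?thesis using key[OF fv True] log_pos[OF True] e0_log by simp
    next
      case False
      have "\<forall>ts\<in>T. \<forall>y'\<in>{1..Y}. f ts y' \<ge> 0" using fv
        unfolding valid_bayes_def e_variable_def T_def by blast
      with False have "\<exists>ts\<in>T. \<exists>y'\<in>{1..Y}. f ts y' = 0" by force
      then show ?thesis using log_zero by simp
    qed
  next
    fix f assume h: "valid_bayes Y \<alpha> l f \<and> log_obj Y \<alpha> l f = log_obj Y \<alpha> l e0"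
    then have fv: "valid_bayes Y \<alpha> l f" by simp
    show "\<forall>ts\<in>train_sets Y l. \<forall>y'\<in>{1..Y}. f ts y' = e0 ts y'"
    proof (cases "\<forall>ts\<in>T. \<forall>y'\<in>{1..Y}. f ts y' > 0")
      case True
      then show ?thesis using key[OF fv True] log_pos[OF True] e0_log h unfolding T_def by simp
    next
      case False
      have "\<forall>ts\<in>T. \<forall>y'\<in>{1..Y}. f ts y' \<ge> 0" using fv
        unfolding valid_bayes_def e_variable_def T_def by blast
      with False have "\<exists>ts\<in>T. \<exists>y'\<in>{1..Y}. f ts y' = 0" by force
      then have "log_obj Y \<alpha> l f = -\<infinity>" using log_zero by simp
      then show ?thesis using h e0_log by simp
    qed
  qed
qed

end
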